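(* Let $D>0$, let $(L,\mathbf N)$ be an architecture with $N_0=d$ and width $W=\max_\ell N_\ell$, let $q\in[1,\infty]$, $r\ge1$, $c:=Dd^{1/q}+1$, and let $0<\varepsilon<cL^2(2r)^{L-1}$. Let $0<\eta\le\varepsilon\,(cWL^2(2r)^{L-1})^{-1}$ and let $Q:\Theta_{L,\mathbf N}\to\Theta_{L,\mathbf N}$ satisfy $\|Q(\theta)-\theta\|_\infty\le\eta$ for all $\theta\in\Theta^q_{L,\mathbf N}(r)$. Then $$\max_{\theta\in\Theta^q_{L,\mathbf N}(r)}\ \max_{x\in[-D,D]^d}\|R_\theta(x)-R_{Q(\theta)}(x)\|_q\le\varepsilon.$$
   Context: ReLU $\rho(x)=\max(0,x)$ coordinatewise. Architecture $(L,\mathbf N)$, $\mathbf N=(N_0,\dots,N_L)$; parameters $\theta=(W_1,\dots,W_L,b_1,\dots,b_L)$, $W_\ell\in\mathbb R^{N_\ell\times N_{\ell-1}}$, $b_\ell\in\mathbb R^{N_\ell}$, forming $\Theta_{L,\mathbf N}$; $\|\theta\|_\infty$ = max absolute value of coordinates. Realization: $R_\theta(x)=W_Ly_{L-1}(x)+b_L$, $y_0=x$, $y_\ell=\rho(W_\ell y_{\ell-1}+b_\ell)$, $1\le\ell\le L-1$. $\|M\|_{q\to q}$ is the operator norm induced by $\|\cdot\|_q$. $\Theta^q_{L,\mathbf N}(r)=\{\theta:\|W_\ell\|_{q\to q}\le r,\ \|b_\ell\|_q\le r\ \forall\ell\}$. $d^{1/\infty}:=1$. *)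

theory Defs
  imports "HOL-Analysis.Analysis"
begin

text \<open>Vectors of length n are functions nat => real, only indices i < n matter.
  The exponent q ranges over [1, infinity], encoded as an extended real.\<close>

definition qnorm :: "ereal \<Rightarrow> nat \<Rightarrow> (nat \<Rightarrow> real) \<Rightarrow> real" where
  "qnorm q n v = (if q = \<infinity> then Max (insert 0 {\<bar>v i\<bar> | i. i < n})
     else (\<Sum>i<n. \<bar>v i\<bar> powr real_of_ereal q) powr (1 / real_of_ereal q))"

definition mat_vec :: "nat \<Rightarrow> (nat \<Rightarrow> nat \<Rightarrow> real) \<Rightarrow> (nat \<Rightarrow> real) \<Rightarrow> (nat \<Rightarrow> real)" where
  "mat_vec n M x = (\<lambda>i. \<Sum>j<n. M i j * x j)"

definition opnorm :: "ereal \<Rightarrow> nat \<Rightarrow> nat \<Rightarrow> (nat \<Rightarrow> nat \<Rightarrow> real) \<Rightarrow> real" where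
  "opnorm q m n M = Sup {qnorm q m (mat_vec n M x) | x. qnorm q n x \<le> 1}"

definition root_q :: "real \<Rightarrow> ereal \<Rightarrow> real" where
  "root_q d q = (if q = \<infinity> then 1 else d powr (1 / real_of_ereal q))"

text \<open>Parameters: (W, b) with W l the weight matrix of layer l (rows < N l, columns < N (l-1))
  and b l the bias of layer l (entries < N l), for layers l = 1..L.\<close>
type_synonym params = "(nat \<Rightarrow> nat \<Rightarrow> nat \<Rightarrow> real) \<times> (nat \<Rightarrow> nat \<Rightarrow> real)"

text \<open>The parameter space Theta_{L,N}: entries outside the index ranges are fixed to 0,
  so that elements correspond bijectively to tuples of matrices and vectors.\<close>
definition Params :: "nat \<Rightarrow> (nat \<Rightarrow> nat) \<Rightarrow> params set" where
  "Params L N = {(W, b). (\<forall>l i j. (l \<in> {1..L} \<and> i < N l \<and> j < N (l - 1)) \<or> W l i j = 0)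
                       \<and> (\<forall>l i. (l \<in> {1..L} \<and> i < N l) \<or> b l i = 0)}"

definition param_supnorm :: "nat \<Rightarrow> (nat \<Rightarrow> nat) \<Rightarrow> params \<Rightarrow> real" where
  "param_supnorm L N \<theta> = Max (insert 0
     ({\<bar>fst \<theta> l i j\<bar> | l i j. l \<in> {1..L} \<and> i < N l \<and> j < N (l - 1)}
      \<union> {\<bar>snd \<theta> l i\<bar> | l i. l \<in> {1..L} \<and> i < N l}))"

definition param_diff :: "params \<Rightarrow> params \<Rightarrow> params" where
  "param_diff \<theta> \<theta>' = ((\<lambda>l i j. fst \<theta> l i j - fst \<theta>' l i j), (\<lambda>l i. snd \<theta> l i - snd \<theta>' l i))"

definition ParamBall :: "ereal \<Rightarrow> nat \<Rightarrow> (nat \<Rightarrow> nat) \<Rightarrow> real \<Rightarrow> params set" where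
  "ParamBall q L N r = {\<theta> \<in> Params L N. \<forall>l \<in> {1..L}.
      opnorm q (N l) (N (l - 1)) (fst \<theta> l) \<le> r \<and> qnorm q (N l) (snd \<theta> l) \<le> r}"

definition relu :: "real \<Rightarrow> real" where "relu t = max 0 t"

fun hidden :: "(nat \<Rightarrow> nat) \<Rightarrow> params \<Rightarrow> nat \<Rightarrow> (nat \<Rightarrow> real) \<Rightarrow> (nat \<Rightarrow> real)" where
  "hidden N \<theta> 0 x = x"
| "hidden N \<theta> (Suc l) x =
     (\<lambda>i. relu (mat_vec (N l) (fst \<theta> (Suc l)) (hidden N \<theta> l x) i + snd \<theta> (Suc l) i))"

definition realization :: "nat \<Rightarrow> (nat \<Rightarrow> nat) \<Rightarrow> params \<Rightarrow> (nat \<Rightarrow> real) \<Rightarrow> (nat \<Rightarrow> real)" where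
  "realization L N \<theta> x =
     (\<lambda>i. mat_vec (N (L - 1)) (fst \<theta> L) (hidden N \<theta> (L - 1) x) i + snd \<theta> L i)"

end

theory Submission
  imports Defs
begin


definition pn :: "real \<Rightarrow> nat \<Rightarrow> (nat \<Rightarrow> real) \<Rightarrow> real" where
  "pn p n v = (\<Sum>i<n. \<bar>v i\<bar> powr p) powr (1/p)"

lemma pn_nonneg: "pn p n v \<ge> 0" by (simp add: pn_def)

lemma powr_inv_cancel: "p \<ge> 1 \<Longrightarrow> (x::real) \<ge> 0 \<Longrightarrow> (x powr p) powr (1/p) = x"
  by (simp add: powr_powr)

lemma pn_ge: assumes "p \<ge> 1" "i < n" shows "\<bar>v i\<bar> \<le> pn p n v"
proof -
  have h: "\<bar>v i\<bar> powr p \<le> (\<Sum>i<n. \<bar>v i\<bar> powr p)"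
    by (rule member_le_sum) (use assms in auto)
  have "(\<bar>v i\<bar> powr p) powr (1/p) \<le> (\<Sum>i<n. \<bar>v i\<bar> powr p) powr (1/p)"
    by (rule powr_mono2) (use assms h in auto)
  thus ?thesis using assms by (simp add: pn_def powr_inv_cancel)
qed

lemma pn_mono: assumes "p \<ge> 1" "\<And>i. i < n \<Longrightarrow> \<bar>u i\<bar> \<le> \<bar>v i\<bar>" shows "pn p n u \<le> pn p n v"
  unfolding pn_def
  by (rule powr_mono2) (use assms in \<open>auto intro!: sum_mono powr_mono2 sum_nonneg\<close>)

lemma pn_le: assumes "p \<ge> 1" "M \<ge> 0" "\<And>i. i < n \<Longrightarrow> \<bar>v i\<bar> \<le> M"
  shows "pn p n v \<le> real n powr (1/p) * M"
proof -
  have "(\<Sum>i<n. \<bar>v i\<bar> powr p) \<le> (\<Sum>i<n. M powr p)"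
    by (rule sum_mono, rule powr_mono2) (use assms in auto)
  hence "pn p n v \<le> (real n * M powr p) powr (1/p)"
    unfolding pn_def by (intro powr_mono2) (use assms in \<open>auto intro!: sum_nonneg\<close>)
  also have "\<dots> = real n powr (1/p) * M"
    using assms by (simp add: powr_mult powr_inv_cancel)
  finally show ?thesis .
qed

lemma pn_scale: assumes "p \<ge> 1" shows "pn p n (\<lambda>i. a * v i) = \<bar>a\<bar> * pn p n v"
proof -
  have "(\<Sum>i<n. \<bar>a * v i\<bar> powr p) = \<bar>a\<bar> powr p * (\<Sum>i<n. \<bar>v i\<bar> powr p)"
    by (simp add: abs_mult powr_mult sum_distrib_left)
  thus ?thesis using assms unfolding pn_def
    by (simp add: powr_mult powr_inv_cancel sum_nonneg)
qed

lemma powr_convex0: assumes "p \<ge> 1" shows "convex_on {0..} (\<lambda>x::real. x powr p)"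
proof (rule convex_on_linorderI)
  fix t x y :: real assume t: "0 < t" "t < 1" and xy: "x \<in> {0..}" "y \<in> {0..}" "x < y"
  show "((1 - t) *\<^sub>R x + t *\<^sub>R y) powr p \<le> (1 - t) * x powr p + t * y powr p"
  proof (cases "x = 0")
    case True
    have "t powr p \<le> t powr 1" using t assms by (intro powr_mono') auto
    hence "t powr p * y powr p \<le> t * y powr p" using t by (intro mult_right_mono) auto
    thus ?thesis using True t xy by (simp add: powr_mult)
  next
    case False
    thus ?thesis using convex_onD[OF powr_convex[OF assms], of t x y] t xy by auto
  qed
qed auto

lemma pn_pow: assumes "p \<ge> 1" shows "pn p n u powr p = (\<Sum>i<n. \<bar>u i\<bar> powr p)"
  using assms unfolding pn_def by (simp add: powr_powr sum_nonneg)

lemma pn_zero_eq: assumes "p \<ge> 1" "pn p n u = 0" "i < n" shows "u i = 0"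
  using pn_ge[OF assms(1) assms(3), of u] assms(2) by simp

lemma pn_triangle: assumes p: "p \<ge> 1"
  shows "pn p n (\<lambda>i. u i + v i) \<le> pn p n u + pn p n v"
proof -
  define a where "a = pn p n u"
  define b where "b = pn p n v"
  have a0: "a \<ge> 0" "b \<ge> 0" by (simp_all add: a_def b_def pn_nonneg)
  show ?thesis
  proof (cases "a = 0 \<or> b = 0")
    case True
    thus ?thesis
    proof
      assume "a = 0"
      hence "pn p n (\<lambda>i. u i + v i) \<le> pn p n v"
        using pn_zero_eq[OF p, of n u] by (intro pn_mono[OF p]) (auto simp: a_def)
      thus ?thesis using a0 by (simp add: a_def b_def)
    next
      assume "b = 0"
      hence "pn p n (\<lambda>i. u i + v i) \<le> pn p n u"
        using pn_zero_eq[OF p, of n v] by (intro pn_mono[OF p]) (auto simp: b_def)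
      thus ?thesis using a0 by (simp add: a_def b_def)
    qed
  next
    case False
    hence ap: "a > 0" "b > 0" using a0 by auto
    define s where "s = a + b"
    have sp: "s > 0" using ap by (simp add: s_def)
    define t where "t = b / s"
    have t01: "0 \<le> t" "t \<le> 1" "1 - t = a / s" using ap sp by (auto simp: t_def s_def field_simps)
    have pt: "(\<bar>u i + v i\<bar> / s) powr p \<le> (1 - t) * (\<bar>u i\<bar> / a) powr p + t * (\<bar>v i\<bar> / b) powr p" for i
    proof -
      have "\<bar>u i + v i\<bar> / s \<le> (1 - t) * (\<bar>u i\<bar> / a) + t * (\<bar>v i\<bar> / b)"
        using ap sp t01 by (simp add: t_def divide_right_mono abs_triangle_ineq add_divide_distrib[symmetric])
      hence "(\<bar>u i + v i\<bar> / s) powr p \<le> ((1 - t) * (\<bar>u i\<bar> / a) + t * (\<bar>v i\<bar> / b)) powr p"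
        using p sp by (intro powr_mono2) auto
      also have "\<dots> \<le> (1 - t) * (\<bar>u i\<bar> / a) powr p + t * (\<bar>v i\<bar> / b) powr p"
        using convex_onD[OF powr_convex0[OF p], of t "\<bar>u i\<bar> / a" "\<bar>v i\<bar> / b"] t01 ap by simp
      finally show ?thesis .
    qed
    have su: "(\<Sum>i<n. (\<bar>u i\<bar> / a) powr p) = 1"
    proof -
      have "(\<Sum>i<n. \<bar>u i\<bar> powr p) = a powr p" using pn_pow[OF p, of n u] by (simp add: a_def)
      moreover have "a powr p > 0" using ap by simp
      ultimately show ?thesis using ap by (simp add: powr_divide sum_divide_distrib[symmetric])
    qed
    have sv: "(\<Sum>i<n. (\<bar>v i\<bar> / b) powr p) = 1"
    proof -
      have "(\<Sum>i<n. \<bar>v i\<bar> powr p) = b powr p" using pn_pow[OF p, of n v] by (simp add: b_def)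
      moreover have "b powr p > 0" using ap by simp
      ultimately show ?thesis using ap by (simp add: powr_divide sum_divide_distrib[symmetric])
    qed
    have "(\<Sum>i<n. (\<bar>u i + v i\<bar> / s) powr p) \<le> (\<Sum>i<n. (1 - t) * (\<bar>u i\<bar> / a) powr p + t * (\<bar>v i\<bar> / b) powr p)"
      by (rule sum_mono) (rule pt)
    also have "\<dots> = 1" using su sv by (simp add: sum.distrib sum_distrib_left[symmetric])
    finally have "(\<Sum>i<n. \<bar>u i + v i\<bar> powr p) / s powr p \<le> 1"
      using sp by (simp add: powr_divide sum_divide_distrib[symmetric])
    hence "(\<Sum>i<n. \<bar>u i + v i\<bar> powr p) \<le> s powr p" using sp by simp
    hence "pn p n (\<lambda>i. u i + v i) \<le> (s powr p) powr (1/p)"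
      unfolding pn_def using p by (intro powr_mono2) (auto intro: sum_nonneg)
    thus ?thesis using p sp by (simp add: powr_inv_cancel s_def a_def b_def)
  qed
qed

lemma pn_sum: assumes p: "p \<ge> 1"
  shows "real n powr (1/p) * (\<Sum>i<n. \<bar>x i\<bar>) \<le> real n * pn p n x"
proof (cases "n = 0")
  case True thus ?thesis by simp
next
  case False
  hence np: "real n > 0" by simp
  have "(\<Sum>i<n. (1 / real n) * \<bar>x i\<bar>) powr p \<le> (\<Sum>i<n. (1 / real n) * \<bar>x i\<bar> powr p)"
    using convex_on_sum[OF _ _ powr_convex0[OF p], of "{..<n}" "\<lambda>_. 1 / real n" "\<lambda>i. \<bar>x i\<bar>"] False
    by (simp add: lessThan_empty_iff)
  hence "((\<Sum>i<n. \<bar>x i\<bar>) / real n) powr p \<le> (\<Sum>i<n. \<bar>x i\<bar> powr p) / real n"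
    by (simp add: sum_distrib_left[symmetric] sum_divide_distrib[symmetric])
  hence "(((\<Sum>i<n. \<bar>x i\<bar>) / real n) powr p) powr (1/p) \<le> ((\<Sum>i<n. \<bar>x i\<bar> powr p) / real n) powr (1/p)"
    using p by (intro powr_mono2) (auto intro: sum_nonneg)
  hence "(\<Sum>i<n. \<bar>x i\<bar>) / real n \<le> pn p n x / real n powr (1/p)"
    using p np by (simp add: powr_inv_cancel sum_nonneg powr_divide pn_def)
  thus ?thesis using np
    by (simp add: field_simps)
qed

definition mn :: "nat \<Rightarrow> (nat \<Rightarrow> real) \<Rightarrow> real" where
  "mn n v = Max (insert 0 {\<bar>v i\<bar> | i. i < n})"

lemma mn_set: "{\<bar>v i\<bar> | i. i < n} = (\<lambda>i. \<bar>v i\<bar>) ` {..<n}" by auto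

lemma mn_nonneg: "mn n v \<ge> 0"
  unfolding mn_def mn_set by (rule Max_ge) auto

lemma mn_ge: "i < n \<Longrightarrow> \<bar>v i\<bar> \<le> mn n v"
  unfolding mn_def mn_set by (rule Max_ge) auto

lemma mn_le: "M \<ge> 0 \<Longrightarrow> (\<And>i. i < n \<Longrightarrow> \<bar>v i\<bar> \<le> M) \<Longrightarrow> mn n v \<le> M"
  unfolding mn_def mn_set by (subst Max_le_iff) auto

lemma q_real: assumes "1 \<le> q" "q \<noteq> \<infinity>" shows "real_of_ereal q \<ge> 1"
  using assms by (cases q) auto

lemma qn_inf: "qnorm \<infinity> n v = mn n v" by (simp add: qnorm_def mn_def)
lemma qn_fin: "q \<noteq> \<infinity> \<Longrightarrow> qnorm q n v = pn (real_of_ereal q) n v" by (simp add: qnorm_def pn_def)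

lemma qn_nonneg: "1 \<le> q \<Longrightarrow> qnorm q n v \<ge> 0"
  by (cases "q = \<infinity>") (simp_all add: qn_inf qn_fin mn_nonneg pn_nonneg)

lemma qn_ge: "1 \<le> q \<Longrightarrow> i < n \<Longrightarrow> \<bar>v i\<bar> \<le> qnorm q n v"
  by (cases "q = \<infinity>") (simp_all add: qn_inf qn_fin mn_ge pn_ge q_real)

lemma qn_mono: "1 \<le> q \<Longrightarrow> (\<And>i. i < n \<Longrightarrow> \<bar>u i\<bar> \<le> \<bar>v i\<bar>) \<Longrightarrow> qnorm q n u \<le> qnorm q n v"
proof (cases "q = \<infinity>")
  case True
  assume "\<And>i. i < n \<Longrightarrow> \<bar>u i\<bar> \<le> \<bar>v i\<bar>"
  thus ?thesis using True by (simp add: qn_inf) (intro mn_le mn_nonneg, meson mn_ge order_trans)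
qed (simp add: qn_fin pn_mono q_real)

lemma qn_ext: "1 \<le> q \<Longrightarrow> (\<And>i. i < n \<Longrightarrow> u i = v i) \<Longrightarrow> qnorm q n u = qnorm q n v"
  by (intro antisym qn_mono) auto

lemma root_q_nonneg: "root_q x q \<ge> 0" by (simp add: root_q_def)

lemma qn_le: "1 \<le> q \<Longrightarrow> M \<ge> 0 \<Longrightarrow> (\<And>i. i < n \<Longrightarrow> \<bar>v i\<bar> \<le> M) \<Longrightarrow> qnorm q n v \<le> root_q (real n) q * M"
  by (cases "q = \<infinity>") (simp_all add: qn_inf qn_fin mn_le pn_le q_real root_q_def)

lemma qn_scale: "1 \<le> q \<Longrightarrow> qnorm q n (\<lambda>i. a * v i) \<le> \<bar>a\<bar> * qnorm q n v"
proof (cases "q = \<infinity>")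
  case True
  show ?thesis using True
    by (simp add: qn_inf) (rule mn_le, simp add: mn_nonneg, simp add: abs_mult mn_ge mult_left_mono)
qed (simp add: qn_fin pn_scale q_real)

lemma qn_triangle: "1 \<le> q \<Longrightarrow> qnorm q n (\<lambda>i. u i + v i) \<le> qnorm q n u + qnorm q n v"
proof (cases "q = \<infinity>")
  case True
  show ?thesis using True
    by (simp add: qn_inf) (rule mn_le, simp add: mn_nonneg add_nonneg_nonneg,
        meson abs_triangle_ineq add_mono mn_ge order_trans)
qed (simp add: qn_fin pn_triangle q_real)

lemma qn_sum: "1 \<le> q \<Longrightarrow> root_q (real n) q * (\<Sum>i<n. \<bar>x i\<bar>) \<le> real n * qnorm q n x"
proof (cases "q = \<infinity>")
  case True
  have "(\<Sum>i<n. \<bar>x i\<bar>) \<le> (\<Sum>i<n. mn n x)" by (rule sum_mono) (simp add: mn_ge)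
  thus ?thesis using True by (simp add: qn_inf root_q_def)
qed (simp add: qn_fin pn_sum q_real root_q_def)



lemma rq_mn: assumes q: "1 \<le> q" and mW: "m \<le> W" and nW: "n \<le> W"
  shows "root_q (real m) q * real n \<le> real W * root_q (real n) q"
proof (cases "q = \<infinity>")
  case True thus ?thesis using nW by (simp add: root_q_def)
next
  case False
  define k where "k = 1 / real_of_ereal q"
  have k: "0 < k" "k \<le> 1" using q_real[OF q False] by (auto simp: k_def)
  show ?thesis
  proof (cases "n = 0")
    case True thus ?thesis by (simp add: root_q_def)
  next
    case n0: False
    have "real n = real n powr (1 - k) * real n powr k" using n0 by (simp add: powr_add[symmetric])
    hence "root_q (real m) q * real n = (real m powr k * real n powr (1 - k)) * real n powr k"
      using False by (simp add: root_q_def k_def)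
    also have "\<dots> \<le> (real W powr k * real W powr (1 - k)) * real n powr k"
      using k mW nW by (intro mult_right_mono mult_mono powr_mono2) auto
    also have "\<dots> = real W * root_q (real n) q" using False n0 mW nW
      by (simp add: root_q_def k_def powr_add[symmetric])
    finally show ?thesis .
  qed
qed

lemma rq_le: assumes q: "1 \<le> q" and mW: "m \<le> W" and W1: "1 \<le> W"
  shows "root_q (real m) q \<le> real W"
proof (cases "q = \<infinity>")
  case True thus ?thesis using W1 by (simp add: root_q_def)
next
  case False
  define k where "k = 1 / real_of_ereal q"
  have k: "0 < k" "k \<le> 1" using q_real[OF q False] by (auto simp: k_def)
  have "real m powr k \<le> real W powr k" using k mW by (intro powr_mono2) auto
  also have "\<dots> \<le> real W powr 1" using k W1 by (intro powr_mono) auto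
  finally show ?thesis using False W1 by (simp add: root_q_def k_def)
qed

lemma mv_bound: assumes q: "1 \<le> q" and E: "\<And>i j. i < m \<Longrightarrow> j < n \<Longrightarrow> \<bar>E i j\<bar> \<le> \<eta>"
  and eta: "\<eta> \<ge> 0" and mW: "m \<le> W" and nW: "n \<le> W"
  shows "qnorm q m (mat_vec n E x) \<le> \<eta> * real W * qnorm q n x"
proof -
  define S where "S = (\<Sum>j<n. \<bar>x j\<bar>)"
  have S0: "S \<ge> 0" by (simp add: S_def sum_nonneg)
  have "\<bar>mat_vec n E x i\<bar> \<le> \<eta> * S" if "i < m" for i
  proof -
    have "\<bar>mat_vec n E x i\<bar> \<le> (\<Sum>j<n. \<bar>E i j * x j\<bar>)" unfolding mat_vec_def by (rule sum_abs)
    also have "\<dots> \<le> (\<Sum>j<n. \<eta> * \<bar>x j\<bar>)"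
      by (rule sum_mono) (use E that in \<open>auto simp: abs_mult intro: mult_right_mono\<close>)
    finally show ?thesis by (simp add: S_def sum_distrib_left)
  qed
  hence h1: "qnorm q m (mat_vec n E x) \<le> root_q (real m) q * (\<eta> * S)"
    by (intro qn_le q) (use eta S0 in auto)
  show ?thesis
  proof (cases "n = 0")
    case True thus ?thesis using h1 eta qn_nonneg[OF q, of 0 x] by (simp add: S_def) (meson mult_nonneg_nonneg of_nat_0_le_iff order_trans)
  next
    case n0: False
    have rp: "root_q (real n) q > 0" using n0 by (simp add: root_q_def)
    have "root_q (real m) q * S * root_q (real n) q = root_q (real m) q * (root_q (real n) q * S)" by simp
    also have "\<dots> \<le> root_q (real m) q * (real n * qnorm q n x)"
      by (intro mult_left_mono qn_sum[OF q, of n x, folded S_def] root_q_nonneg)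
    also have "\<dots> = (root_q (real m) q * real n) * qnorm q n x" by simp
    also have "\<dots> \<le> (real W * root_q (real n) q) * qnorm q n x"
      by (intro mult_right_mono rq_mn q mW nW qn_nonneg)
    finally have "root_q (real m) q * S \<le> real W * qnorm q n x" using rp by simp
    hence "\<eta> * (root_q (real m) q * S) \<le> \<eta> * (real W * qnorm q n x)" using eta by (rule mult_left_mono)
    thus ?thesis using h1 by (simp add: algebra_simps)
  qed
qed

lemma opnorm_bound: assumes q: "1 \<le> q" and op: "opnorm q m n A \<le> r"
  shows "qnorm q m (mat_vec n A x) \<le> r * qnorm q n x"
proof -
  define K where "K = (\<Sum>i<m. \<Sum>j<n. \<bar>A i j\<bar>)"
  have bdd: "bdd_above {qnorm q m (mat_vec n A x) | x. qnorm q n x \<le> 1}"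
  proof (rule bdd_aboveI, clarify)
    fix y assume y: "qnorm q n y \<le> 1"
    have "\<bar>mat_vec n A y i\<bar> \<le> K" if "i < m" for i
    proof -
      have "\<bar>mat_vec n A y i\<bar> \<le> (\<Sum>j<n. \<bar>A i j * y j\<bar>)" unfolding mat_vec_def by (rule sum_abs)
      also have "\<dots> \<le> (\<Sum>j<n. \<bar>A i j\<bar>)"
      proof (rule sum_mono)
        fix j assume "j \<in> {..<n}"
        hence "\<bar>y j\<bar> \<le> 1" using qn_ge[OF q, of j n y] y by auto
        thus "\<bar>A i j * y j\<bar> \<le> \<bar>A i j\<bar>" by (simp add: abs_mult mult_left_le)
      qed
      also have "\<dots> \<le> K" unfolding K_def
        by (rule member_le_sum[where f="\<lambda>i. \<Sum>j<n. \<bar>A i j\<bar>"]) (use that in \<open>auto intro: sum_nonneg\<close>)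
      finally show ?thesis .
    qed
    moreover have "K \<ge> 0" by (simp add: K_def sum_nonneg)
    ultimately show "qnorm q m (mat_vec n A y) \<le> root_q (real m) q * K" by (intro qn_le q)
  qed
  have sup: "qnorm q n y \<le> 1 \<Longrightarrow> qnorm q m (mat_vec n A y) \<le> r" for y
    using cSup_upper[OF _ bdd, of "qnorm q m (mat_vec n A y)"] op unfolding opnorm_def by force
  define t where "t = qnorm q n x"
  show ?thesis
  proof (cases "t = 0")
    case True
    have "\<And>j. j < n \<Longrightarrow> x j = 0" using qn_ge[OF q, of _ n x] True by (force simp: t_def)
    hence "\<And>i. mat_vec n A x i = 0" by (simp add: mat_vec_def)
    hence "qnorm q m (mat_vec n A x) \<le> root_q (real m) q * 0" by (intro qn_le q) auto
    thus ?thesis using True by (simp add: t_def)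
  next
    case False
    hence tp: "t > 0" using qn_nonneg[OF q] by (simp add: t_def order_less_le)
    define x' where "x' = (\<lambda>j. (1 / t) * x j)"
    have "qnorm q n x' \<le> \<bar>1/t\<bar> * t" unfolding x'_def t_def by (rule qn_scale[OF q])
    hence "qnorm q n x' \<le> 1" using tp by simp
    hence h: "qnorm q m (mat_vec n A x') \<le> r" by (rule sup)
    have "mat_vec n A x = (\<lambda>i. t * mat_vec n A x' i)"
      using tp by (simp add: mat_vec_def x'_def sum_distrib_left)
    hence "qnorm q m (mat_vec n A x) \<le> \<bar>t\<bar> * qnorm q m (mat_vec n A x')" using qn_scale[OF q] by simp
    also have "\<dots> \<le> t * r" using tp h by simp
    finally show ?thesis by (simp add: t_def mult.commute)
  qed
qed



lemma qn_neg: "1 \<le> q \<Longrightarrow> qnorm q n (\<lambda>i. - v i) = qnorm q n v"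
  by (intro antisym qn_mono) auto

lemma layer:
  assumes q: "1 \<le> q" and op: "opnorm q m n A \<le> r" and bn: "qnorm q m bb \<le> r"
    and E: "\<And>i j. i < m \<Longrightarrow> j < n \<Longrightarrow> \<bar>A' i j - A i j\<bar> \<le> \<eta>"
    and Eb: "\<And>i. i < m \<Longrightarrow> \<bar>bb' i - bb i\<bar> \<le> \<eta>"
    and eta: "\<eta> \<ge> 0" and mW: "m \<le> W" and nW: "n \<le> W" and W1: "1 \<le> W"
  shows "qnorm q m (\<lambda>i. mat_vec n A y i + bb i) \<le> r * qnorm q n y + r"
    and "qnorm q m (\<lambda>i. (mat_vec n A y i + bb i) - (mat_vec n A' y' i + bb' i))
          \<le> r * qnorm q n (\<lambda>i. y i - y' i) + \<eta> * real W * (qnorm q n y + qnorm q n (\<lambda>i. y i - y' i)) + \<eta> * real W"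
proof -
  show "qnorm q m (\<lambda>i. mat_vec n A y i + bb i) \<le> r * qnorm q n y + r"
    using qn_triangle[OF q, of m "mat_vec n A y" bb] opnorm_bound[OF q op, of y] bn by simp
  define e where "e = qnorm q n (\<lambda>i. y i - y' i)"
  have y': "qnorm q n y' \<le> qnorm q n y + e"
    using qn_triangle[OF q, of n y "\<lambda>i. - (y i - y' i)"] qn_neg[OF q, of n "\<lambda>i. y i - y' i"]
    by (simp add: e_def)
  have split: "(\<lambda>i. (mat_vec n A y i + bb i) - (mat_vec n A' y' i + bb' i)) =
     (\<lambda>i. (mat_vec n A (\<lambda>j. y j - y' j) i + mat_vec n (\<lambda>i j. A i j - A' i j) y' i) + (bb i - bb' i))"
    by (rule ext) (simp add: mat_vec_def algebra_simps flip: sum_subtractf sum.distrib)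
  have t1: "qnorm q m (mat_vec n A (\<lambda>j. y j - y' j)) \<le> r * e"
    using opnorm_bound[OF q op] by (simp add: e_def)
  have t2: "qnorm q m (mat_vec n (\<lambda>i j. A i j - A' i j) y') \<le> \<eta> * real W * qnorm q n y'"
    by (rule mv_bound[OF q _ eta mW nW]) (use E in \<open>simp add: abs_minus_commute\<close>)
  have t3: "qnorm q m (\<lambda>i. bb i - bb' i) \<le> root_q (real m) q * \<eta>"
    by (rule qn_le[OF q eta]) (use Eb in \<open>simp add: abs_minus_commute\<close>)
  have t3': "root_q (real m) q * \<eta> \<le> \<eta> * real W"
    using rq_le[OF q mW W1] eta by (simp add: mult.commute mult_left_mono)
  have t2': "\<eta> * real W * qnorm q n y' \<le> \<eta> * real W * (qnorm q n y + e)"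
    using y' eta by (intro mult_left_mono) auto
  show "qnorm q m (\<lambda>i. (mat_vec n A y i + bb i) - (mat_vec n A' y' i + bb' i))
          \<le> r * qnorm q n (\<lambda>i. y i - y' i) + \<eta> * real W * (qnorm q n y + qnorm q n (\<lambda>i. y i - y' i)) + \<eta> * real W"
    unfolding split e_def[symmetric]
    using qn_triangle[OF q, of m "\<lambda>i. mat_vec n A (\<lambda>j. y j - y' j) i + mat_vec n (\<lambda>i j. A i j - A' i j) y' i" "\<lambda>i. bb i - bb' i"]
      qn_triangle[OF q, of m "mat_vec n A (\<lambda>j. y j - y' j)" "mat_vec n (\<lambda>i j. A i j - A' i j) y'"]
      t1 t2 t2' t3 t3' by linarith
qed

lemma a_step: assumes "a' \<le> r * a + r" "a \<le> r ^ k * (c + k) - 1" "r \<ge> 1" "c \<ge> 1"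
  shows "a' \<le> r ^ Suc k * (c + real (Suc k)) - 1"
proof -
  have "r * a \<le> r * (r ^ k * (c + k) - 1)" using assms by (intro mult_left_mono) auto
  hence "a' \<le> r ^ Suc k * (c + k)" using assms by (simp add: algebra_simps)
  moreover have "r ^ Suc k \<ge> 1" using assms one_le_power[of r "Suc k"] by blast
  ultimately show ?thesis by (simp add: algebra_simps)
qed

lemma e_step: assumes e': "e' \<le> r * e + \<delta> * (a + e) + \<delta>" and a: "a \<le> r ^ k * (c + k) - 1"
  and e: "e \<le> \<delta> * c * real k ^ 2 * (2 * r) ^ (k - 1)" and e0: "e \<ge> 0"
  and r: "r \<ge> 1" and c: "c \<ge> 1" and d: "0 \<le> \<delta>" "\<delta> \<le> 1"
  shows "e' \<le> \<delta> * c * real (Suc k) ^ 2 * (2 * r) ^ k"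
proof -
  have "\<delta> * e \<le> r * e" using d r e0 by (intro mult_right_mono) auto
  hence "e' \<le> 2 * r * e + \<delta> * (a + 1)" using e' by (simp add: algebra_simps)
  also have "\<dots> \<le> 2 * r * (\<delta> * c * real k ^ 2 * (2 * r) ^ (k - 1)) + \<delta> * (r ^ k * (c + k))"
    using e a r d by (intro add_mono mult_left_mono) auto
  also have "2 * r * (\<delta> * c * real k ^ 2 * (2 * r) ^ (k - 1)) = \<delta> * c * real k ^ 2 * (2 * r) ^ k"
    by (cases k) (simp_all add: algebra_simps)
  also have "\<delta> * (r ^ k * (c + k)) \<le> \<delta> * ((2 * r) ^ k * (c * (real k + 1)))"
  proof -
    have h1: "r ^ k \<le> (2 * r) ^ k" using r by (intro power_mono) auto
    have h2: "c + real k \<le> c * (real k + 1)" using c mult_right_mono[of 1 c "real k"] by (simp add: algebra_simps)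
    have "r ^ k * (c + k) \<le> (2 * r) ^ k * (c * (real k + 1))"
      using h1 h2 r c by (intro mult_mono) auto
    thus ?thesis using d by (intro mult_left_mono) auto
  qed
  also have "\<delta> * c * real k ^ 2 * (2 * r) ^ k + \<delta> * ((2 * r) ^ k * (c * (real k + 1)))
      = \<delta> * c * (2 * r) ^ k * (real k ^ 2 + k + 1)" by (simp add: algebra_simps power2_eq_square)
  also have "\<dots> \<le> \<delta> * c * (2 * r) ^ k * (real (Suc k) ^ 2)"
    using d c r by (intro mult_left_mono) (auto simp: power2_eq_square algebra_simps)
  finally show ?thesis by (simp add: algebra_simps)
qed

lemma supnorm_ge: assumes "l \<in> {1..L}" "i < N l" "j < N (l - 1)"
  shows "\<bar>fst \<theta> l i j\<bar> \<le> param_supnorm L N \<theta>"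
proof -
  have fin: "finite {\<bar>fst \<theta> l i j\<bar> | l i j. l \<in> {1..L} \<and> i < N l \<and> j < N (l - 1)}"
  proof (rule finite_subset)
    show "finite ((\<lambda>(l,i,j). \<bar>fst \<theta> l i j\<bar>) ` (SIGMA l:{1..L}. SIGMA i:{..<N l}. {..<N (l-1)}))"
      by (intro finite_imageI finite_SigmaI) auto
  qed (auto simp: image_iff; force)
  have fin2: "finite {\<bar>snd \<theta> l i\<bar> | l i. l \<in> {1..L} \<and> i < N l}"
    by (rule finite_subset[of _ "(\<lambda>(l,i). \<bar>snd \<theta> l i\<bar>) ` (SIGMA l:{1..L}. {..<N l})"])
       (auto intro!: finite_SigmaI finite_imageI)
  show ?thesis unfolding param_supnorm_def
    by (rule Max_ge) (use fin fin2 assms in blast)+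
qed

lemma supnorm_ge2: assumes "l \<in> {1..L}" "i < N l"
  shows "\<bar>snd \<theta> l i\<bar> \<le> param_supnorm L N \<theta>"
proof -
  have fin: "finite {\<bar>fst \<theta> l i j\<bar> | l i j. l \<in> {1..L} \<and> i < N l \<and> j < N (l - 1)}"
  proof (rule finite_subset)
    show "finite ((\<lambda>(l,i,j). \<bar>fst \<theta> l i j\<bar>) ` (SIGMA l:{1..L}. SIGMA i:{..<N l}. {..<N (l-1)}))"
      by (intro finite_imageI finite_SigmaI) auto
  qed (auto simp: image_iff; force)
  have fin2: "finite {\<bar>snd \<theta> l i\<bar> | l i. l \<in> {1..L} \<and> i < N l}"
    by (rule finite_subset[of _ "(\<lambda>(l,i). \<bar>snd \<theta> l i\<bar>) ` (SIGMA l:{1..L}. {..<N l})"])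
       (auto intro!: finite_SigmaI finite_imageI)
  show ?thesis unfolding param_supnorm_def
    by (rule Max_ge) (use fin fin2 assms in blast)+
qed



lemma relu_abs: "\<bar>relu a\<bar> \<le> \<bar>a\<bar>" by (simp add: relu_def)
lemma relu_lip: "\<bar>relu a - relu b\<bar> \<le> \<bar>a - b\<bar>" by (simp add: relu_def max_def)

theorem mainTheorem5:
  fixes D r \<epsilon> \<eta> :: real and L d :: nat and N :: "nat \<Rightarrow> nat" and q :: ereal
    and Q :: "params \<Rightarrow> params"
  assumes "D > 0" and "L \<ge> 1" and "N 0 = d"
    and "1 \<le> q"
    and "r \<ge> 1"
    and "\<epsilon> > 0"
    and "\<epsilon> < (D * root_q (real d) q + 1) * real L ^ 2 * (2 * r) ^ (L - 1)"
    and "\<eta> > 0"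
    and "\<eta> \<le> \<epsilon> / ((D * root_q (real d) q + 1) * real (Max (N ` {0..L})) * real L ^ 2
                     * (2 * r) ^ (L - 1))"
    and "\<forall>\<theta> \<in> Params L N. Q \<theta> \<in> Params L N"
    and "\<forall>\<theta> \<in> ParamBall q L N r. param_supnorm L N (param_diff (Q \<theta>) \<theta>) \<le> \<eta>"
  shows "\<forall>\<theta> \<in> ParamBall q L N r. \<forall>x. (\<forall>i<d. \<bar>x i\<bar> \<le> D) \<longrightarrow>
           qnorm q (N L) (\<lambda>i. realization L N \<theta> x i - realization L N (Q \<theta>) x i) \<le> \<epsilon>"
proof (intro ballI allI impI)
  note D0 = assms(1) and L1 = assms(2) and N0 = assms(3) and q = assms(4) and r1 = assms(5)
    and eps = assms(6) and epsK = assms(7) and eta0 = assms(8) and etaK = assms(9) and sn = assms(11)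
  fix \<theta> x assume th: "\<theta> \<in> ParamBall q L N r" and xb: "\<forall>i<d. \<bar>x i\<bar> \<le> D"
  define \<theta>' where "\<theta>' = Q \<theta>"
  define W where "W = Max (N ` {0..L})"
  define c where "c = D * root_q (real d) q + 1"
  define \<delta> where "\<delta> = \<eta> * real W"
  define K where "K = c * real L ^ 2 * (2 * r) ^ (L - 1)"
  have NW: "N l \<le> W" if "l \<le> L" for l unfolding W_def by (rule Max_ge) (use that in auto)
  have c1: "c \<ge> 1" using D0 by (simp add: c_def root_q_nonneg)
  have Kp: "K > 0" using c1 L1 r1 by (simp add: K_def)
  have eqK: "(D * root_q (real d) q + 1) * real (Max (N ` {0..L})) * real L ^ 2 * (2 * r) ^ (L - 1) = real W * K"
    by (simp add: K_def c_def W_def)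
  have etaK': "\<eta> \<le> \<epsilon> / (real W * K)" using etaK by (simp only: eqK)
  have W1: "1 \<le> W"
  proof (rule ccontr)
    assume "\<not> 1 \<le> W" hence "W = 0" by simp
    thus False using etaK' eta0 by simp
  qed
  have dK: "\<delta> \<le> \<epsilon> / K"
  proof -
    have "\<eta> * (real W * K) \<le> \<epsilon>" using etaK' W1 Kp by (simp add: pos_le_divide_eq)
    thus ?thesis using Kp by (simp add: pos_le_divide_eq \<delta>_def algebra_simps)
  qed
  have epsK': "\<epsilon> < K" using epsK by (simp add: K_def c_def)
  have "\<epsilon> / K \<le> 1" using epsK' Kp by (simp add: divide_le_eq_1)
  hence d1: "\<delta> \<le> 1" using dK by linarith
  have d0: "\<delta> \<ge> 0" using eta0 by (simp add: \<delta>_def)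
  have snt: "param_supnorm L N (param_diff \<theta>' \<theta>) \<le> \<eta>" using sn th by (simp add: \<theta>'_def)
  have EW: "\<bar>fst \<theta>' l i j - fst \<theta> l i j\<bar> \<le> \<eta>" if "l \<in> {1..L}" "i < N l" "j < N (l - 1)" for l i j
    using supnorm_ge[of l L i N j "param_diff \<theta>' \<theta>"] that snt by (simp add: param_diff_def)
  have Eb: "\<bar>snd \<theta>' l i - snd \<theta> l i\<bar> \<le> \<eta>" if "l \<in> {1..L}" "i < N l" for l i
    using supnorm_ge2[of l L i N "param_diff \<theta>' \<theta>"] that snt by (simp add: param_diff_def)
  have opb: "opnorm q (N l) (N (l - 1)) (fst \<theta> l) \<le> r" "qnorm q (N l) (snd \<theta> l) \<le> r" if "l \<in> {1..L}" for l
    using th that by (auto simp: ParamBall_def)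
  have LA: "qnorm q (N l) (\<lambda>i. mat_vec (N (l-1)) (fst \<theta> l) y i + snd \<theta> l i) \<le> r * qnorm q (N (l-1)) y + r"
    and LB: "qnorm q (N l) (\<lambda>i. (mat_vec (N (l-1)) (fst \<theta> l) y i + snd \<theta> l i) - (mat_vec (N (l-1)) (fst \<theta>' l) y' i + snd \<theta>' l i))
          \<le> r * qnorm q (N (l-1)) (\<lambda>i. y i - y' i) + \<delta> * (qnorm q (N (l-1)) y + qnorm q (N (l-1)) (\<lambda>i. y i - y' i)) + \<delta>"
    if l: "l \<in> {1..L}" for l y y'
  proof -
    have m: "N l \<le> W" "N (l - 1) \<le> W" using l NW by auto
    note lay = layer[OF q opb(1)[OF l] opb(2)[OF l] EW[OF l] Eb[OF l] less_imp_le[OF eta0] m W1]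
    show "qnorm q (N l) (\<lambda>i. mat_vec (N (l-1)) (fst \<theta> l) y i + snd \<theta> l i) \<le> r * qnorm q (N (l-1)) y + r"
      by (rule lay(1))
    show "qnorm q (N l) (\<lambda>i. (mat_vec (N (l-1)) (fst \<theta> l) y i + snd \<theta> l i) - (mat_vec (N (l-1)) (fst \<theta>' l) y' i + snd \<theta>' l i))
          \<le> r * qnorm q (N (l-1)) (\<lambda>i. y i - y' i) + \<delta> * (qnorm q (N (l-1)) y + qnorm q (N (l-1)) (\<lambda>i. y i - y' i)) + \<delta>"
      using lay(2)[of y y'] by (simp add: \<delta>_def)
  qed
  define a where "a k = qnorm q (N k) (hidden N \<theta> k x)" for k
  define e where "e k = qnorm q (N k) (\<lambda>i. hidden N \<theta> k x i - hidden N \<theta>' k x i)" for k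
  have e0: "e k \<ge> 0" for k by (simp add: e_def qn_nonneg[OF q])
  have ind: "k < L \<longrightarrow> a k \<le> r ^ k * (c + k) - 1 \<and> e k \<le> \<delta> * c * real k ^ 2 * (2 * r) ^ (k - 1)" for k
  proof (induction k)
    case 0
    have "a 0 \<le> root_q (real d) q * D" unfolding a_def using xb D0 N0
      by (simp, intro qn_le[OF q]) auto
    moreover have "e 0 \<le> root_q (real (N 0)) q * 0" unfolding e_def by (rule qn_le[OF q]) auto
    ultimately show ?case by (simp add: c_def mult.commute)
  next
    case (Suc k)
    show ?case
    proof
      assume kL: "Suc k < L"
      hence IH: "a k \<le> r ^ k * (c + k) - 1" "e k \<le> \<delta> * c * real k ^ 2 * (2 * r) ^ (k - 1)" using Suc by auto
      have l: "Suc k \<in> {1..L}" using kL by auto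
      have "a (Suc k) \<le> qnorm q (N (Suc k)) (\<lambda>i. mat_vec (N k) (fst \<theta> (Suc k)) (hidden N \<theta> k x) i + snd \<theta> (Suc k) i)"
        unfolding a_def by (simp, intro qn_mono[OF q] relu_abs)
      also have "\<dots> \<le> r * a k + r" using LA[OF l, of "hidden N \<theta> k x"] by (simp add: a_def)
      finally have A: "a (Suc k) \<le> r ^ Suc k * (c + real (Suc k)) - 1" using a_step IH(1) r1 c1 by blast
      have "e (Suc k) \<le> qnorm q (N (Suc k)) (\<lambda>i. (mat_vec (N k) (fst \<theta> (Suc k)) (hidden N \<theta> k x) i + snd \<theta> (Suc k) i)
             - (mat_vec (N k) (fst \<theta>' (Suc k)) (hidden N \<theta>' k x) i + snd \<theta>' (Suc k) i))"
        unfolding e_def by (simp, intro qn_mono[OF q] relu_lip)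
      also have "\<dots> \<le> r * e k + \<delta> * (a k + e k) + \<delta>"
        using LB[OF l, of "hidden N \<theta> k x" "hidden N \<theta>' k x"] by (simp add: a_def e_def)
      finally have "e (Suc k) \<le> \<delta> * c * real (Suc k) ^ 2 * (2 * r) ^ k"
        using e_step IH e0 r1 c1 d0 d1 by blast
      thus "a (Suc k) \<le> r ^ Suc k * (c + real (Suc k)) - 1 \<and> e (Suc k) \<le> \<delta> * c * real (Suc k) ^ 2 * (2 * r) ^ (Suc k - 1)"
        using A by simp
    qed
  qed
  define k where "k = L - 1"
  have Lk: "L = Suc k" using L1 by (simp add: k_def)
  have kL: "k < L" using Lk by simp
  have "qnorm q (N L) (\<lambda>i. realization L N \<theta> x i - realization L N (Q \<theta>) x i)
      \<le> r * e k + \<delta> * (a k + e k) + \<delta>"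
    using LB[of L "hidden N \<theta> k x" "hidden N \<theta>' k x"] L1
    by (simp add: realization_def a_def e_def k_def \<theta>'_def)
  also have "\<dots> \<le> \<delta> * c * real (Suc k) ^ 2 * (2 * r) ^ k"
    by (rule e_step[where e="e k" and a="a k" and k=k]) (use ind[of k] kL e0 r1 c1 d0 d1 in auto)
  also have "\<dots> = \<delta> * K" by (simp add: K_def Lk)
  also have "\<dots> \<le> \<epsilon>" using dK Kp by (simp add: pos_le_divide_eq mult.commute)
  finally show "qnorm q (N L) (\<lambda>i. realization L N \<theta> x i - realization L N (Q \<theta>) x i) \<le> \<epsilon>" .
qed

end
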